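(* Let $n=2k$ and let $u_1,\ldots,u_k$ be pairwise distinct elements of $\mathbb{F}_{2^n}$ such that $u_iu_j^{2^k}\in\mathbb{F}_{2^k}^*$ for all $1\le i<j\le k$. Let $t$ be a positive integer, $F_1,\ldots,F_t$ reduced polynomials in $\mathbb{F}_2[X_1,\ldots,X_k]$, $f_i(x)=F_i(\mathrm{Tr}^n_1(u_1x),\ldots,\mathrm{Tr}^n_1(u_kx))$, and $\widehat H(x)=(x^{2^k+1},f_1(x),\ldots,f_t(x))$. Then for $(u,v)\in(\mathbb{F}_{2^k}\times\mathbb{F}_2^t)\setminus\{(0,0)\}$, the component $\langle(u,v),\widehat H(x)\rangle$ is bent if and only if $u\neq0$. In particular, $\widehat H$ has exactly $2^{k+t}-2^t$ bent components (the maximal number of bent components of a $(2k,k+t)$-function), and for every $v\in\mathbb{F}_2^t$ the function $\sum_{i=1}^t v_if_i$ is not bent.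
   Context: $\mathrm{Tr}^n_1(x)=\sum_{i=0}^{n-1}x^{2^i}$; $\langle(u,v),\widehat H(x)\rangle=\mathrm{Tr}^k_1(ux^{2^k+1})+\sum_{i=1}^tv_if_i(x)$. A Boolean function $f$ on $\mathbb{F}_{2^n}$ is bent if $|\sum_x(-1)^{f(x)+\mathrm{Tr}^n_1(ax)}|=2^{n/2}$ for all $a$. A reduced polynomial is a multilinear polynomial over $\mathbb{F}_2$. *)

theory Defs
  imports Complex_Main
begin

text \<open>Absolute trace Tr^m_1(x) = sum_{i<m} x^(2^i).  On F_{2^n} with m = n this is
  the absolute trace; restricted to the subfield F_{2^k} (m = k) it is Tr^k_1.\<close>
definition tr :: "nat \<Rightarrow> 'a::field \<Rightarrow> 'a" where
  "tr m x = (\<Sum>i<m. x ^ (2 ^ i))"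

definition subfield :: "nat \<Rightarrow> 'a::field set" where
  "subfield k = {x. x ^ (2 ^ k) = x}"

text \<open>A reduced (multilinear) polynomial over F_2 in X_0,...,X_{k-1} is given by its set of
  monomials, each monomial being a set of variable indices.  Evaluation at a point
  y in F_2^k (y j = True meaning 1) is the parity of the monomials evaluating to 1.\<close>
definition reduced_poly :: "nat \<Rightarrow> nat set set \<Rightarrow> bool" where
  "reduced_poly k F \<longleftrightarrow> F \<subseteq> Pow {0..<k}"

definition eval_rpoly :: "nat set set \<Rightarrow> (nat \<Rightarrow> bool) \<Rightarrow> bool" where
  "eval_rpoly F y \<longleftrightarrow> odd (card {S \<in> F. \<forall>j\<in>S. y j})"

text \<open>Boolean functions F_{2^n} -> F_2 are represented as functions into the field taking
  values in the prime field {0,1}.  Bentness via the Walsh transform.\<close>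
definition bent :: "nat \<Rightarrow> ('a::{field,finite} \<Rightarrow> 'a) \<Rightarrow> bool" where
  "bent n f \<longleftrightarrow> (\<forall>a::'a.
     \<bar>\<Sum>x\<in>UNIV. (if f x + tr n (a * x) = 0 then 1 else -1 :: real)\<bar> = 2 powr (real n / 2))"

end

theory Submission imports Defs "HOL-Computational_Algebra.Polynomial"
begin

definition chi :: "'a::field \<Rightarrow> real" where "chi y = (if y = 0 then 1 else -1)"

context
  fixes dummy :: "'a::field itself"
  assumes c2: "(2::'a) = 0"
begin

lemma add_self[simp]: "(x::'a) + x = 0"
proof -
  have "x + x = 2 * x" by (simp add: algebra_simps mult_2)
  thus ?thesis using c2 by simp
qed

lemma add_self2[simp]: "(x::'a) + (x + y) = y"
  by (metis add.assoc add_self add_0)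

lemma sq_add: "((x::'a) + y)^2 = x^2 + y^2"
proof -
  have "(x+y)^2 = x^2 + y^2 + 2*x*y" by (simp add: power2_eq_square algebra_simps c2)
  moreover have "2*x*y = 0" by (simp add: c2)
  ultimately show ?thesis by simp
qed

lemma frob_add: "((x::'a) + y)^(2^i) = x^(2^i) + y^(2^i)"
proof (induction i)
  case 0 then show ?case by simp
next
  case (Suc i)
  have "(x+y)^(2^Suc i) = ((x+y)^(2^i))^2" by (simp add: power_mult[symmetric] mult.commute)
  also have "\<dots> = (x^(2^i))^2 + (y^(2^i))^2" using Suc by (simp add: sq_add)
  also have "\<dots> = x^(2^Suc i) + y^(2^Suc i)" by (simp add: power_mult[symmetric] mult.commute)
  finally show ?case .
qed

lemma tr_add: "tr m ((x::'a) + y) = tr m x + tr m y"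
  by (simp add: tr_def frob_add sum.distrib)

lemma tr_zero[simp]: "tr m (0::'a) = 0"
  by (simp add: tr_def power_0_left)

lemma sum_sq: "(\<Sum>i\<in>A. (a i::'a))^2 = (\<Sum>i\<in>A. (a i)^2)"
proof (cases "finite A")
  case True then show ?thesis
    by (induction A rule: finite_induct) (auto simp: sq_add)
qed simp

lemma tr_sq: "(tr m (y::'a))^2 = tr m y + y^(2^m) + y"
proof -
  have "(tr m y)^2 = (\<Sum>i<m. y^(2^Suc i))"
    by (simp add: tr_def sum_sq power_mult[symmetric] mult.commute)
  moreover have "(\<Sum>i<Suc m. y^(2^i)) = y + (\<Sum>i<m. y^(2^Suc i))"
    by (subst sum.lessThan_Suc_shift) simp
  ultimately have "(tr m y)^2 + y = tr m y + y^(2^m)"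
    by (simp add: tr_def add.commute)
  hence "(tr m y)^2 + y + y = tr m y + y^(2^m) + y" by simp
  thus ?thesis by (simp add: add.assoc)
qed

lemma tr_split: "tr (a + b) (y::'a) = tr a y + tr b (y^(2^a))"
proof (induction b)
  case 0 then show ?case by (simp add: tr_def)
next
  case (Suc b)
  have "tr (a + Suc b) y = tr (a+b) y + y^(2^(a+b))" by (simp add: tr_def)
  also have "\<dots> = tr a y + (tr b (y^(2^a)) + (y^(2^a))^(2^b))"
    using Suc by (simp add: power_mult[symmetric] power_add add.assoc)
  also have "\<dots> = tr a y + tr (Suc b) (y^(2^a))" by (simp add: tr_def)
  finally show ?case .
qed

lemma b01: "(y::'a)^2 = y \<longleftrightarrow> y = 0 \<or> y = 1"
proof -
  have "y^2 = y \<longleftrightarrow> y * (y - 1) = 0" by (simp add: power2_eq_square algebra_simps)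
  thus ?thesis by simp
qed

lemma b01_add: "(p::'a)^2 = p \<Longrightarrow> q^2 = q \<Longrightarrow> (p+q)^2 = p + q"
  by (simp add: sq_add)

lemma one_one: "(1::'a) + 1 = 0" by simp

lemma chi_add: "(p::'a)^2 = p \<Longrightarrow> q^2 = q \<Longrightarrow> chi (p+q) = chi p * chi q"
  unfolding b01 chi_def by auto

lemma chi_add1: "(p::'a)^2 = p \<Longrightarrow> chi (p + 1) = - chi p"
  unfolding b01 chi_def by auto

lemma sum01: "(\<And>i. i \<in> A \<Longrightarrow> (a i)^2 = (a i::'a)) \<Longrightarrow> (\<Sum>i\<in>A. a i)^2 = (\<Sum>i\<in>A. a i)"
  by (simp add: sum_sq)

end

context
  fixes n :: nat
  assumes c2: "(2::'a::{field,finite}) = 0"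
    and cardF: "card (UNIV :: 'a set) = 2 ^ n"
begin

lemma n_pos: "n \<ge> 1"
proof (rule ccontr)
  assume "\<not> n \<ge> 1"
  hence "card (UNIV :: 'a set) = 1" using cardF by simp
  moreover have "card {0::'a, 1} \<le> card (UNIV :: 'a set)" by (rule card_mono) auto
  ultimately show False by simp
qed

lemma fermat: "(x::'a) ^ (2^n) = x"
proof (cases "x = 0")
  case False
  have "x * (\<Prod>y\<in>UNIV-{0}. x * y) = x * x ^ (card (UNIV :: 'a set) - 1) * \<Prod>(UNIV-{0})"
    by (simp add: prod.distrib mult_ac)
  also have "x * x ^ (card (UNIV :: 'a set) - 1) = x ^ Suc (card (UNIV :: 'a set) - 1)"
    by (subst power_Suc) auto
  also have "Suc (card (UNIV :: 'a set) - 1) = card (UNIV :: 'a set)"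
    using finite_UNIV_card_ge_0[where ?'a = 'a] by simp
  also have "(\<Prod>y\<in>UNIV-{0}. x * y) = (\<Prod>y\<in>UNIV-{0}. y)"
    by (rule prod.reindex_bij_witness[of _ "\<lambda>y. y / x" "\<lambda>y. x * y"]) (use False in auto)
  finally show ?thesis
    using cardF by simp
qed (use n_pos in auto)

lemma T_b01: "(tr n (y::'a))^2 = tr n y"
  using tr_sq[OF c2, of n y] fermat[of y] add_self[OF c2] by (simp add: add.assoc)

lemma sum_shift: "(\<Sum>x\<in>UNIV. g x) = (\<Sum>x\<in>UNIV. g (x + (c::'a)))"
  by (rule sum.reindex_bij_witness[of _ "\<lambda>x. x + c" "\<lambda>x. x - c"]) auto

lemma sum_mult: "(a::'a) \<noteq> 0 \<Longrightarrow> (\<Sum>x\<in>UNIV. g x) = (\<Sum>x\<in>UNIV. g (a * x))"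
  by (rule sum.reindex_bij_witness[of _ "\<lambda>x. a * x" "\<lambda>x. x / a"]) auto

lemma neg_trick:
  fixes G :: "'a \<Rightarrow> 'a"
  assumes "\<And>x. (G x)^2 = (G x::'a)" and "\<And>x. G (x + c) = G x + 1"
  shows "(\<Sum>x\<in>UNIV. chi (G x)) = 0"
proof -
  have "(\<Sum>x\<in>UNIV. chi (G x)) = (\<Sum>x\<in>UNIV. chi (G (x + c)))" by (rule sum_shift)
  also have "\<dots> = (\<Sum>x\<in>UNIV. - chi (G x))" using assms chi_add1[OF c2] by simp
  finally show ?thesis by (simp add: sum_negf)
qed

lemma T_nonzero: "\<exists>x::'a. tr n x = 1"
proof (rule ccontr)
  assume A: "\<not> ?thesis"
  define p :: "'a poly" where "p = (\<Sum>i<n. monom 1 (2^i))"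
  have pe: "poly p x = tr n x" for x by (simp add: p_def tr_def poly_sum poly_monom)
  have cp: "coeff p m = (\<Sum>i<n. if 2^i = m then 1 else 0)" for m
    by (simp add: p_def coeff_sum coeff_monom)
  have "coeff p (2^(n-1)) = (\<Sum>i<n. if i = n - 1 then 1 else 0)"
    unfolding cp by (rule sum.cong) auto
  also have "\<dots> = 1" using n_pos by simp
  finally have p0: "p \<noteq> 0" by auto
  have "degree p \<le> 2^(n-1)"
  proof (rule degree_le, intro allI impI)
    fix m :: nat assume m: "2^(n-1) < m"
    have "\<forall>i<n. 2^i \<noteq> m"
    proof (intro allI impI)
      fix i assume "i < n"
      hence "(2::nat)^i \<le> 2^(n-1)" by (intro power_increasing) auto
      thus "2^i \<noteq> m" using m by auto
    qed
    thus "coeff p m = 0" unfolding cp by simp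
  qed
  moreover have "card {x. poly p x = 0} \<le> degree p" by (rule card_poly_roots_bound[OF p0])
  moreover have "{x. poly p x = 0} = UNIV"
  proof -
    have "tr n x = 0" for x :: 'a
    proof -
      have "tr n x = 0 \<or> tr n x = 1" using T_b01[of x] b01[OF c2, of "tr n x"] by simp
      thus ?thesis using A by blast
    qed
    thus ?thesis by (simp add: pe)
  qed
  ultimately have "(2::nat)^n \<le> 2^(n-1)" using cardF by (metis le_trans)
  moreover have "(2::nat)^(n-1) < 2^n" using n_pos by simp
  ultimately show False by linarith
qed

lemma char_sum: "(a::'a) \<noteq> 0 \<Longrightarrow> (\<Sum>x\<in>UNIV. chi (tr n (a * x))) = 0"
proof -
  assume a: "a \<noteq> 0"
  obtain c where c: "tr n c = (1::'a)" using T_nonzero by auto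
  have "(\<Sum>x\<in>UNIV. chi (tr n (a * x))) = (\<Sum>x\<in>UNIV. chi (tr n (x::'a)))"
    by (rule sum_mult[OF a, of "\<lambda>x. chi (tr n x)", symmetric])
  also have "\<dots> = 0"
    by (rule neg_trick[of _ c]) (simp_all add: T_b01 tr_add[OF c2] c)
  finally show ?thesis .
qed

lemma bent_chi: "bent n g \<longleftrightarrow> (\<forall>a. \<bar>\<Sum>x\<in>UNIV. chi (g x + tr n (a * x))\<bar> = 2 powr (real n / 2))"
  unfolding bent_def chi_def by simp

lemma bent_crit:
  assumes g01: "\<And>x. (g x)^2 = (g x::'a)"
    and C0: "\<And>z. z \<noteq> 0 \<Longrightarrow> (\<Sum>x\<in>UNIV. chi (g x + g (x + z))) = 0"
  shows "bent n g"
  unfolding bent_chi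
proof
  fix a :: 'a
  define G where "G x = g x + tr n (a * x)" for x
  have G01: "(G x)^2 = G x" for x
    unfolding G_def by (rule b01_add[OF c2 g01 T_b01])
  define W where "W = (\<Sum>x\<in>UNIV. chi (G x))"
  have "W * W = (\<Sum>x\<in>UNIV. \<Sum>y\<in>UNIV. chi (G x) * chi (G y))"
    unfolding W_def by (simp add: sum_product)
  also have "\<dots> = (\<Sum>x\<in>UNIV. \<Sum>z\<in>UNIV. chi (G x) * chi (G (z + x)))"
    by (rule sum.cong[OF refl], rule sum_shift)
  also have "\<dots> = (\<Sum>z\<in>UNIV. \<Sum>x\<in>UNIV. chi (g x + g (x + z)) * chi (tr n (a * z)))"
  proof -
    have "chi (G x) * chi (G (z + x)) = chi (g x + g (x + z)) * chi (tr n (a * z))" for x z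
    proof -
      have "chi (G x) * chi (G (z + x)) = chi (G x + G (z + x))"
        by (rule chi_add[OF c2 G01 G01, symmetric])
      also have "G x + G (z + x) = (g x + g (x + z)) + tr n (a * z)"
        unfolding G_def by (simp add: distrib_left tr_add[OF c2] add_ac add_self2[OF c2])
      also have "chi \<dots> = chi (g x + g (x + z)) * chi (tr n (a * z))"
        by (rule chi_add[OF c2 b01_add[OF c2 g01 g01] T_b01])
      finally show ?thesis .
    qed
    thus ?thesis by (subst sum.swap) simp
  qed
  also have "\<dots> = (\<Sum>z\<in>UNIV. if z = (0::'a) then (2::real)^n else 0)"
  proof -
    have Cz: "(\<Sum>x\<in>UNIV. chi (g x + g (x + z)) * chi (tr n (a * z))) = (if z = 0 then (2::real)^n else 0)" for z
    proof (cases "z = 0")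
      case True then show ?thesis using cardF by (simp add: chi_def add_self[OF c2] tr_zero[OF c2])
    next
      case False then show ?thesis using C0[OF False] by (simp add: sum_distrib_right[symmetric])
    qed
    show ?thesis by (simp only: Cz)
  qed
  also have "\<dots> = 2^n" by simp
  finally have WW: "W * W = 2^n" .
  have "\<bar>W\<bar> = sqrt (W^2)" by simp
  also have "\<dots> = sqrt (2 powr n)" using WW by (simp add: power2_eq_square powr_realpow)
  also have "\<dots> = 2 powr (real n / 2)" by (simp add: powr_half_sqrt_powr)
  finally show "\<bar>\<Sum>x\<in>UNIV. chi (g x + tr n (a * x))\<bar> = 2 powr (real n / 2)"
    unfolding W_def G_def .
qed

lemma not_bent:
  assumes g01: "\<And>x. (g x)^2 = (g x::'a)"
    and sh: "\<And>x. g (x + c) + tr n (a * (x + c)) = g x + tr n (a * x) + 1"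
  shows "\<not> bent n g"
proof
  assume "bent n g"
  hence "\<bar>\<Sum>x\<in>UNIV. chi (g x + tr n (a * x))\<bar> = 2 powr (real n / 2)" unfolding bent_chi by blast
  moreover have "(\<Sum>x\<in>UNIV. chi (g x + tr n (a * x))) = 0"
    by (rule neg_trick[of _ c]) (auto simp: b01_add[OF c2 g01 T_b01] sh)
  ultimately show False by simp
qed

end

lemma add_eq0: "(2::'a::field) = 0 \<Longrightarrow> (a::'a) + b = 0 \<longleftrightarrow> a = b"
  by (metis add_self add_self2 add_0_right add.commute)

lemma subfield_card:
  fixes k n :: nat
  assumes c2: "(2::'a::{field,finite}) = 0"
    and cardF: "card (UNIV :: 'a set) = 2 ^ n"
    and nk: "n = 2 * k"
  shows "card (subfield k :: 'a set) = 2 ^ k"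
proof -
  define N :: nat where "N = 2^k"
  have k1: "k \<ge> 1" using n_pos[OF c2 cardF] nk by simp
  have N2: "N \<ge> 2" unfolding N_def using k1
    by (metis one_le_numeral power_increasing power_one_right)
  have NN: "N * N = 2^n" unfolding N_def nk by (simp add: power_add[symmetric] mult_2)
  have fe: "(x::'a) ^ (N*N) = x" for x using fermat[OF c2 cardF] NN by simp
  define K where "K = (subfield k :: 'a set)"
  have K_def': "x \<in> K \<longleftrightarrow> x ^ N = x" for x unfolding K_def subfield_def N_def by simp
  define p :: "'a poly" where "p = monom 1 N - [:0, 1:]"
  have pe: "poly p x = x ^ N - x" for x by (simp add: p_def poly_monom)
  have "coeff [:0,1::'a:] N = 0" using N2 by (intro coeff_eq_0) simp
  hence "coeff p N = 1" by (simp add: p_def coeff_monom)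
  hence p0: "p \<noteq> 0" by auto
  have dp: "degree p \<le> N" unfolding p_def
    by (rule degree_diff_le) (use N2 in \<open>auto intro: degree_monom_le\<close>)
  have "K = {x. poly p x = 0}" by (auto simp: K_def' pe)
  hence up: "card K \<le> N" using card_poly_roots_bound[OF p0] dp by simp
  define L where "L x = x ^ N + x" for x :: 'a
  have Ladd: "L (x + y) = L x + L y" for x y
    unfolding L_def N_def by (simp add: frob_add[OF c2] add_ac)
  have LK: "L x \<in> K" for x
  proof -
    have "(L x) ^ N = x ^ (N * N) + x ^ N"
      unfolding L_def N_def by (simp add: frob_add[OF c2] power_mult)
    thus ?thesis unfolding K_def' L_def using fe by (simp add: add.commute)
  qed
  have L0: "L x = 0 \<longleftrightarrow> x \<in> K" for x
    unfolding L_def K_def' using add_eq0[OF c2] by simp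
  define C where "C = (\<lambda>v. L -` {v}) ` range L"
  have fib: "L -` {L x0} = (\<lambda>d. x0 + d) ` K" for x0
  proof (intro set_eqI iffI)
    fix y assume "y \<in> L -` {L x0}"
    hence "L (y + x0) = 0" using Ladd[of y x0] c2 by simp
    hence "y + x0 \<in> K" using L0 by simp
    moreover have "y = x0 + (y + x0)" by (simp add: add_self2[OF c2] add_ac)
    ultimately show "y \<in> (\<lambda>d. x0 + d) ` K" by blast
  next
    fix y assume "y \<in> (\<lambda>d. x0 + d) ` K"
    then obtain d where d: "d \<in> K" "y = x0 + d" by blast
    have "L y = L x0 + L d" using d Ladd by simp
    thus "y \<in> L -` {L x0}" using d L0 by simp
  qed
  have f3: "\<forall>c\<in>C. card c = card K"
  proof
    fix c assume "c \<in> C"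
    then obtain x0 where "c = L -` {L x0}" unfolding C_def by blast
    hence "c = (\<lambda>d. x0 + d) ` K" using fib by simp
    thus "card c = card K" by (simp add: card_image)
  qed
  have f4: "\<forall>c1\<in>C. \<forall>c2\<in>C. c1 \<noteq> c2 \<longrightarrow> c1 \<inter> c2 = {}"
  proof (intro ballI impI)
    fix c1 c2 assume "c1 \<in> C" "c2 \<in> C" "c1 \<noteq> c2"
    obtain x1 x2 where e: "c1 = L -` {L x1}" "c2 = L -` {L x2}"
      using \<open>c1 \<in> C\<close> \<open>c2 \<in> C\<close> unfolding C_def by auto
    show "c1 \<inter> c2 = {}"
    proof (rule ccontr)
      assume "c1 \<inter> c2 \<noteq> {}"
      then obtain y where "y \<in> c1" "y \<in> c2" by blast
      hence "L x1 = L x2" using e by simp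
      hence "c1 = c2" using e by simp
      thus False using \<open>c1 \<noteq> c2\<close> by simp
    qed
  qed
  have pc: "card K * card C = card (\<Union>C)"
    using card_partition[of C "card K"] f3 f4 by simp
  have UC: "\<Union>C = UNIV"
  proof -
    have "x \<in> \<Union>C" for x
    proof -
      have "L -` {L x} \<in> C" unfolding C_def by simp
      moreover have "x \<in> L -` {L x}" by simp
      ultimately show ?thesis by blast
    qed
    thus ?thesis by blast
  qed
  have CK: "card C \<le> card K"
  proof -
    have "card C \<le> card (range L)" unfolding C_def by (rule card_image_le) simp
    also have "\<dots> \<le> card K" by (rule card_mono) (auto simp: LK)
    finally show ?thesis .
  qed
  have "2^n = card K * card C" using pc UC cardF by simp
  also have "\<dots> \<le> card K * card K" using CK by simp
  finally have "2^n \<le> card K * card K" .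
  hence "N * N \<le> card K * card K" using NN by simp
  hence "N \<le> card K"
  proof (rule contrapos_pp)
    assume "\<not> N \<le> card K"
    hence "card K < N" by simp
    hence "card K * card K < N * N" by (intro mult_strict_mono) auto
    thus "\<not> N * N \<le> card K * card K" by simp
  qed
  with up show ?thesis unfolding K_def N_def by simp
qed

theorem corollary6:
  fixes u :: "nat \<Rightarrow> 'a::{field,finite}"
    and k n t :: nat
    and F :: "nat \<Rightarrow> nat set set"
    and f :: "nat \<Rightarrow> 'a \<Rightarrow> 'a"
    and H :: "'a \<Rightarrow> nat set \<Rightarrow> 'a \<Rightarrow> 'a"
  assumes char2: "(2::'a) = 0"
    and card: "card (UNIV :: 'a set) = 2 ^ n"
    and nk: "n = 2 * k"
    and distinct: "inj_on u {0..<k}"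
    and cond: "\<And>i j. i < j \<Longrightarrow> j < k \<Longrightarrow>
                 u i * u j ^ (2 ^ k) \<in> subfield k \<and> u i * u j ^ (2 ^ k) \<noteq> 0"
    and tpos: "0 < t"
    and Fred: "\<And>i. i < t \<Longrightarrow> reduced_poly k (F i)"
    and f_def: "\<And>i x. f i x = (if eval_rpoly (F i) (\<lambda>j. tr n (u j * x) = 1) then 1 else 0)"
    and H_def: "\<And>w V x. H w V x = tr k (w * x ^ (2 ^ k + 1)) + (\<Sum>i\<in>V. f i x)"
  shows "(\<forall>w V. w \<in> subfield k \<and> V \<subseteq> {0..<t} \<and> (w \<noteq> 0 \<or> V \<noteq> {}) \<longrightarrow>
             (bent n (H w V) \<longleftrightarrow> w \<noteq> 0))
       \<and> card {(w, V). w \<in> subfield k \<and> V \<subseteq> {0..<t} \<and> (w \<noteq> 0 \<or> V \<noteq> {})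
                \<and> bent n (H w V)} = 2 ^ (k + t) - 2 ^ t
       \<and> (\<forall>V. V \<subseteq> {0..<t} \<longrightarrow> \<not> bent n (\<lambda>x. \<Sum>i\<in>V. f i x))"
proof -
  define N :: nat where "N = 2^k"
  have NN: "N * N = 2^n" unfolding N_def nk by (simp add: power_add[symmetric] mult_2)
  have fe: "(x::'a) ^ (N*N) = x" for x using fermat[OF char2 card] NN by simp
  have T01: "(tr n y)^2 = tr n y" for y :: 'a by (rule T_b01[OF char2 card])
  have Tadd: "tr n (x + y) = tr n x + tr n y" for x y :: 'a by (rule tr_add[OF char2])
  have nkk: "n = k + k" using nk by simp
  have subI: "x ^ N = x \<Longrightarrow> x \<in> subfield k" for x :: 'a unfolding subfield_def N_def by simp
  have subD: "x \<in> subfield k \<Longrightarrow> x ^ N = x" for x :: 'a unfolding subfield_def N_def by simp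
  have sub_T: "tr n s = 0" if "s \<in> subfield k" for s :: 'a
  proof -
    have "tr n s = tr k s + tr k (s ^ (2^k))" unfolding nkk by (rule tr_split[OF char2])
    also have "s ^ (2^k) = s" using subD[OF that] N_def by simp
    finally show ?thesis using add_self[OF char2] by simp
  qed
  have sub_mult: "s * r \<in> subfield k" if "s \<in> subfield k" "r \<in> subfield k" for s r :: 'a
    using subD[OF that(1)] subD[OF that(2)] by (intro subI) (simp add: power_mult_distrib)
  have sub_inv: "inverse s \<in> subfield k" if "s \<in> subfield k" for s :: 'a
    using subD[OF that] by (intro subI) (simp add: power_inverse)
  have u_sub: "u i * u j ^ N \<in> subfield k" if "i < k" "j < k" for i j
  proof (cases i j rule: linorder_cases)
    case less then show ?thesis using cond[OF less that(2)] N_def by simp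
  next
    case equal
    have "(u i * u i ^ N) ^ N = u i ^ N * u i"
      using fe[of "u i"] by (simp add: power_mult_distrib power_mult[symmetric])
    then show ?thesis using equal by (intro subI) (simp add: mult.commute)
  next
    case greater
    have "u j * u i ^ N \<in> subfield k" using cond[OF greater that(1)] N_def by simp
    hence "(u j * u i ^ N) ^ N = u j * u i ^ N" by (rule subD)
    moreover have "(u j * u i ^ N) ^ N = u j ^ N * u i"
      using fe[of "u i"] by (simp add: power_mult_distrib power_mult[symmetric])
    ultimately have "u i * u j ^ N = u j * u i ^ N" by (simp add: mult.commute)
    thus ?thesis using \<open>u j * u i ^ N \<in> subfield k\<close> by simp
  qed
  define Q where "Q w x = tr k (w * x ^ (N + 1))" for w x :: 'a
  define h where "h V x = (\<Sum>i\<in>V. f i x)" for V x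
  have Hqh: "H w V x = Q w x + h V x" for w V x unfolding H_def Q_def h_def N_def by simp
  have Qexp: "Q w (x + z) = Q w x + Q w z + tr n (w * z ^ N * x)"
    if w: "w \<in> subfield k" for w x z :: 'a
  proof -
    define y where "y = w * z ^ N * x"
    have yN: "y ^ N = w * x ^ N * z"
      unfolding y_def using subD[OF w] fe[of z]
      by (simp add: power_mult_distrib power_mult[symmetric] mult_ac)
    have "(x + z) ^ N = x ^ N + z ^ N" unfolding N_def by (rule frob_add[OF char2])
    hence "w * (x + z) ^ (N + 1) = w * x ^ (N + 1) + w * z ^ (N + 1) + (y + w * x ^ N * z)"
      unfolding y_def by (simp add: algebra_simps)
    hence "w * (x + z) ^ (N + 1) = w * x ^ (N + 1) + w * z ^ (N + 1) + (y + y ^ N)"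
      unfolding yN .
    hence "Q w (x + z) = Q w x + Q w z + (tr k y + tr k (y ^ (2^k)))"
      unfolding Q_def N_def by (simp add: tr_add[OF char2])
    also have "tr k y + tr k (y ^ (2^k)) = tr n y" unfolding nkk by (rule tr_split[OF char2, symmetric])
    finally show ?thesis unfolding y_def .
  qed
  have Q01: "(Q w x)^2 = Q w x" if w: "w \<in> subfield k" for w x :: 'a
  proof -
    have xs: "x ^ (N + 1) \<in> subfield k"
    proof (rule subI)
      have "(x ^ (N + 1)) ^ N = x ^ (N * N) * x ^ N" by (simp add: power_mult[symmetric] power_mult_distrib)
      thus "(x ^ (N + 1)) ^ N = x ^ (N + 1)" using fe[of x] by (simp add: mult.commute)
    qed
    have ys: "(w * x ^ (N + 1)) ^ N = w * x ^ (N + 1)" by (rule subD[OF sub_mult[OF w xs]])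
    show ?thesis unfolding Q_def using tr_sq[OF char2, of k "w * x ^ (N + 1)"] ys N_def
      add_self[OF char2] by (simp add: add.assoc char2)
  qed
  have f01: "(f i x)^2 = f i x" for i x by (simp add: f_def)
  have h01: "(h V x)^2 = h V x" for V x unfolding h_def by (rule sum01[OF char2 f01])
  have H01: "(H w V x)^2 = H w V x" if "w \<in> subfield k" for w V x
    unfolding Hqh by (rule b01_add[OF char2 Q01[OF that] h01])
  have h_inv: "h V (x + d) = h V x"
    if V: "V \<subseteq> {0..<t}" and d: "\<forall>j<k. tr n (u j * d) = 0" for V x d
    unfolding h_def
  proof (rule sum.cong[OF refl])
    fix i assume "i \<in> V"
    hence "i < t" using V by auto
    hence Fi: "F i \<subseteq> Pow {0..<k}" using Fred unfolding reduced_poly_def by blast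
    have "{S \<in> F i. \<forall>j\<in>S. tr n (u j * (x + d)) = 1} = {S \<in> F i. \<forall>j\<in>S. tr n (u j * x) = 1}"
    proof -
      have "tr n (u j * (x + d)) = tr n (u j * x)" if "j < k" for j
        using d that by (simp add: distrib_left Tadd)
      moreover have "\<And>S j. S \<in> F i \<Longrightarrow> j \<in> S \<Longrightarrow> j < k" using Fi by (meson PowD atLeastLessThan_iff subsetD)
      ultimately show ?thesis by (smt (verit, best) Collect_cong)
    qed
    thus "f i (x + d) = f i x" unfolding f_def eval_rpoly_def by simp
  qed
  have nb: "\<not> bent n (\<lambda>x. \<Sum>i\<in>V. f i x)" if V: "V \<subseteq> {0..<t}" for V
  proof -
    obtain x0 :: 'a where x0: "x0 \<noteq> 0" "\<forall>j<k. tr n (u j * x0) = 0"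
    proof (cases "\<exists>j<k. u j \<noteq> 0")
      case True
      then obtain j where j: "j < k" "u j \<noteq> 0" by blast
      show ?thesis
      proof (rule that[of "u j ^ N"])
        show "u j ^ N \<noteq> 0" using j by simp
        show "\<forall>i<k. tr n (u i * u j ^ N) = 0" using u_sub j sub_T by blast
      qed
    next
      case False
      show ?thesis by (rule that[of 1]) (use False tr_zero[OF char2] in auto)
    qed
    obtain c :: 'a where c: "tr n c = 1" using T_nonzero[OF char2 card] by blast
    define a where "a = c / x0"
    have ac: "a * x0 = c" unfolding a_def using x0 by simp
    show ?thesis
    proof (rule not_bent[OF char2 card, of _ x0 a])
      show "((\<Sum>i\<in>V. f i x))^2 = (\<Sum>i\<in>V. f i x)" for x using h01 unfolding h_def .
      show "(\<Sum>i\<in>V. f i (x + x0)) + tr n (a * (x + x0)) = (\<Sum>i\<in>V. f i x) + tr n (a * x) + 1" for x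
        using h_inv[OF V x0(2), of x] unfolding h_def by (simp add: distrib_left Tadd ac c add.assoc)
    qed
  qed
  have bt: "bent n (H w V)" if w: "w \<in> subfield k" "w \<noteq> 0" and V: "V \<subseteq> {0..<t}" for w V
  proof (rule bent_crit[OF char2 card])
    show "(H w V x)^2 = H w V x" for x by (rule H01[OF w(1)])
    fix z :: 'a assume z: "z \<noteq> 0"
    show "(\<Sum>x\<in>UNIV. chi (H w V x + H w V (x + z))) = 0"
    proof (cases "\<forall>j<k. tr n (u j * z) = 0")
      case True
      have eq: "H w V x + H w V (x + z) = Q w z + tr n ((w * z ^ N) * x)" for x
        unfolding Hqh Qexp[OF w(1)] h_inv[OF V True]
        by (simp add: add_ac add_self2[OF char2])
      have "(\<Sum>x\<in>UNIV. chi (H w V x + H w V (x + z))) = (\<Sum>x\<in>UNIV. chi (Q w z) * chi (tr n ((w * z ^ N) * x)))"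
        unfolding eq by (rule sum.cong[OF refl], rule chi_add[OF char2 Q01[OF w(1)] T01])
      also have "\<dots> = chi (Q w z) * (\<Sum>x\<in>UNIV. chi (tr n ((w * z ^ N) * x)))"
        by (simp add: sum_distrib_left)
      also have "(\<Sum>x\<in>UNIV. chi (tr n ((w * z ^ N) * x))) = 0"
        by (rule char_sum[OF char2 card]) (use w z in simp)
      finally show ?thesis by simp
    next
      case False
      then obtain j where j: "j < k" "tr n (u j * z) \<noteq> 0" by blast
      have Tj: "tr n (u j * z) = 1" using j(2) T01 b01[OF char2] by blast
      define x0 where "x0 = inverse w * u j ^ N"
      have x0E: "\<forall>i<k. tr n (u i * x0) = 0"
      proof (intro allI impI)
        fix i assume "i < k"
        have "u i * x0 = inverse w * (u i * u j ^ N)" unfolding x0_def by (simp add: mult_ac)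
        also have "\<dots> \<in> subfield k" by (rule sub_mult[OF sub_inv[OF w(1)] u_sub[OF \<open>i < k\<close> j(1)]])
        finally show "tr n (u i * x0) = 0" by (rule sub_T)
      qed
      have wx0: "w * x0 ^ N = u j"
      proof -
        have "x0 ^ N = inverse w * u j"
          unfolding x0_def using subD[OF sub_inv[OF w(1)]] fe[of "u j"]
          by (simp add: power_mult_distrib power_mult[symmetric])
        thus ?thesis using w(2) by simp
      qed
      define G where "G x = H w V x + H w V (x + z)" for x
      have G01: "(G x)^2 = G x" for x unfolding G_def by (rule b01_add[OF char2 H01[OF w(1)] H01[OF w(1)]])
      have Gsh: "G (x + x0) = G x + 1" for x
      proof -
        have e1: "H w V (x + x0) = Q w x + Q w x0 + tr n (u j * x) + h V x"
          unfolding Hqh Qexp[OF w(1)] h_inv[OF V x0E] wx0 ..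
        have ex: "x + x0 + z = (x + z) + x0" by (simp add: add_ac)
        hence e2: "H w V (x + x0 + z) = Q w (x + z) + Q w x0 + (tr n (u j * x) + tr n (u j * z)) + h V (x + z)"
          unfolding Hqh using Qexp[OF w(1), of "x + z" x0] h_inv[OF V x0E, of "x + z"] wx0
          by (simp add: distrib_left Tadd ex)
        show ?thesis unfolding G_def e1 e2 unfolding Hqh Tj
          by (simp add: add_ac add_self2[OF char2] char2)
      qed
      show ?thesis using neg_trick[OF char2 card, of G x0] G01 Gsh unfolding G_def by blast
    qed
  qed
  have claim1: "\<forall>w V. w \<in> subfield k \<and> V \<subseteq> {0..<t} \<and> (w \<noteq> 0 \<or> V \<noteq> {}) \<longrightarrow>
             (bent n (H w V) \<longleftrightarrow> w \<noteq> 0)"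
  proof (intro allI impI)
    fix w :: 'a and V assume A: "w \<in> subfield k \<and> V \<subseteq> {0..<t} \<and> (w \<noteq> 0 \<or> V \<noteq> {})"
    show "bent n (H w V) \<longleftrightarrow> w \<noteq> 0"
    proof (cases "w = 0")
      case True
      have "H w V = (\<lambda>x. \<Sum>i\<in>V. f i x)" using True by (simp add: H_def tr_zero[OF char2] fun_eq_iff)
      thus ?thesis using nb A True by simp
    next
      case False thus ?thesis using bt A by simp
    qed
  qed
  have setEq: "{(w, V). w \<in> subfield k \<and> V \<subseteq> {0..<t} \<and> (w \<noteq> 0 \<or> V \<noteq> {}) \<and> bent n (H w V)}
      = (subfield k - {0}) \<times> Pow {0..<t}"
    using claim1 bt by auto
  have sc: "card (subfield k :: 'a set) = 2 ^ k" by (rule subfield_card[OF char2 card nk])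
  have z0: "(0::'a) \<in> subfield k" unfolding subfield_def by simp
  have "card ((subfield k - {0::'a}) \<times> Pow {0..<t}) = (2^k - 1) * 2^t"
    using sc z0 by (simp add: card_cartesian_product card_Pow card_Diff_singleton)
  also have "\<dots> = 2 ^ (k + t) - 2 ^ t" by (simp add: diff_mult_distrib power_add)
  finally have claim2: "card {(w, V). w \<in> subfield k \<and> V \<subseteq> {0..<t} \<and> (w \<noteq> 0 \<or> V \<noteq> {})
                \<and> bent n (H w V)} = 2 ^ (k + t) - 2 ^ t" unfolding setEq .
  show ?thesis using claim1 claim2 nb by blast
qed

end
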